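(* Let $G$ be a finite simple graph with $n$ vertices $v_1,\dots,v_n$, and let $\bar{\bar{d}}(G)=\sqrt{\frac{d(v_1)^2+d(v_2)^2+\cdots+d(v_n)^2}{n}}$, where $d(v)$ denotes the degree of $v$. Then $$\varphi(G)\geq \frac{n}{n-\bar{\bar{d}}(G)}.$$ Moreover, equality holds if and only if $n\equiv 0 \pmod{\varphi(G)}$ and $G$ is a regular graph of degree $\frac{n(\varphi(G)-1)}{\varphi(G)}$.
   Context: All graphs are finite, undirected, without loops or multiple edges. For a graph $G$ with $n$ vertices, a set $V\subseteq V(G)$ is called a $\delta$-set in $G$ if $d(v)\leq n-|V|$ for every $v\in V$. The graph $G$ is called a generalized $r$-partite graph if there is a partition $V(G)=V_1\cup\dots\cup V_r$ into pairwise disjoint sets each of which is a $\delta$-set in $G$. The invariant $\varphi(G)$ is the smallest integer $r$ such that $G$ is a generalized $r$-partite graph. *)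

theory Defs
  imports Complex_Main
begin

text \<open>A finite simple graph is given by a finite vertex set V and a symmetric,
irreflexive adjacency relation E; only adjacencies inside V matter.\<close>

definition simple_graph :: "'a set \<Rightarrow> ('a \<Rightarrow> 'a \<Rightarrow> bool) \<Rightarrow> bool" where
  "simple_graph V E \<longleftrightarrow> finite V \<and> (\<forall>u v. E u v \<longrightarrow> E v u) \<and> (\<forall>v. \<not> E v v)"

definition degree :: "'a set \<Rightarrow> ('a \<Rightarrow> 'a \<Rightarrow> bool) \<Rightarrow> 'a \<Rightarrow> nat" where
  "degree V E v = card {u \<in> V. E v u}"

definition delta_set :: "'a set \<Rightarrow> ('a \<Rightarrow> 'a \<Rightarrow> bool) \<Rightarrow> 'a set \<Rightarrow> bool" where
  "delta_set V E W \<longleftrightarrow> W \<subseteq> V \<and> (\<forall>v\<in>W. int (degree V E v) \<le> int (card V) - int (card W))"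

definition gen_r_partite :: "'a set \<Rightarrow> ('a \<Rightarrow> 'a \<Rightarrow> bool) \<Rightarrow> nat \<Rightarrow> bool" where
  "gen_r_partite V E r \<longleftrightarrow>
     (\<exists>P :: nat \<Rightarrow> 'a set.
        (\<Union>i<r. P i) = V \<and>
        (\<forall>i<r. \<forall>j<r. i \<noteq> j \<longrightarrow> P i \<inter> P j = {}) \<and>
        (\<forall>i<r. delta_set V E (P i)))"

definition phi :: "'a set \<Rightarrow> ('a \<Rightarrow> 'a \<Rightarrow> bool) \<Rightarrow> nat" where
  "phi V E = (LEAST r. gen_r_partite V E r)"

definition quad_mean_degree :: "'a set \<Rightarrow> ('a \<Rightarrow> 'a \<Rightarrow> bool) \<Rightarrow> real" where
  "quad_mean_degree V E = sqrt ((\<Sum>v\<in>V. (real (degree V E v))\<^sup>2) / real (card V))"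

end

theory Submission
  imports Defs
begin

lemma tangent:
  fixes a n c :: real
  assumes "a = c \<or> a \<le> 2*n - 2*c"
  shows "a*(n-a)^2 \<le> c*(n-c)^2 + (n-c)*(n-3*c)*(a-c)"
proof -
  have id: "c*(n-c)^2 + (n-c)*(n-3*c)*(a-c) - a*(n-a)^2 = (a-c)^2*(2*n-2*c-a)"
    by (simp add: algebra_simps power2_eq_square)
  have "(a-c)^2*(2*n-2*c-a) \<ge> 0" using assms by auto
  then show ?thesis using id by linarith
qed

lemma deg_lt:
  assumes "simple_graph V E" "v \<in> V"
  shows "degree V E v < card V"
proof -
  have f: "finite V" using assms(1) by (simp add: simple_graph_def)
  have "{u \<in> V. E v u} \<subseteq> V - {v}" using assms by (auto simp: simple_graph_def)
  hence "card {u \<in> V. E v u} \<le> card (V - {v})" using f by (intro card_mono) auto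
  also have "\<dots> < card V" using f assms(2) by (metis card_Diff1_less)
  finally show ?thesis by (simp add: degree_def)
qed

lemma gen_card:
  assumes "simple_graph V E"
  shows "gen_r_partite V E (card V)"
proof -
  have f: "finite V" using assms(1) by (simp add: simple_graph_def)
  obtain h where h: "bij_betw h {0..<card V} V" using ex_bij_betw_nat_finite[OF f] by blast
  let ?P = "\<lambda>i. {h i}"
  have "(\<Union>i<card V. ?P i) = V" using h by (auto simp: bij_betw_def lessThan_atLeast0)
  moreover have "\<forall>i<card V. \<forall>j<card V. i \<noteq> j \<longrightarrow> ?P i \<inter> ?P j = {}"
    using h by (auto simp: bij_betw_def inj_on_def)
  moreover have "\<forall>i<card V. delta_set V E (?P i)"
  proof (intro allI impI)
    fix i assume i: "i < card V"
    hence hi: "h i \<in> V" using h by (auto simp: bij_betw_def)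
    have "degree V E (h i) < card V" using deg_lt[OF assms hi] .
    thus "delta_set V E (?P i)" using hi by (auto simp: delta_set_def)
  qed
  ultimately show ?thesis unfolding gen_r_partite_def by blast
qed

lemma phi_props:
  assumes "simple_graph V E" "V \<noteq> {}"
  shows "gen_r_partite V E (phi V E)" "phi V E \<ge> 1"
proof -
  show g: "gen_r_partite V E (phi V E)" unfolding phi_def by (rule LeastI[where P="gen_r_partite V E", OF gen_card[OF assms(1)]])
  show "phi V E \<ge> 1"
  proof (rule ccontr)
    assume "\<not> phi V E \<ge> 1"
    hence "phi V E = 0" by simp
    with g assms(2) show False by (simp add: gen_r_partite_def)
  qed
qed

lemma tangent_eq:
  fixes a n c :: real
  assumes "a*(n-a)^2 = c*(n-c)^2 + (n-c)*(n-3*c)*(a-c)"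
  shows "(a-c)^2*(2*n-2*c-a) = 0"
proof -
  have id: "c*(n-c)^2 + (n-c)*(n-3*c)*(a-c) - a*(n-a)^2 = (a-c)^2*(2*n-2*c-a)"
    by (simp add: algebra_simps power2_eq_square)
  then show ?thesis using assms by linarith
qed

theorem theorem1p1:
  fixes V :: "'a set" and E :: "'a \<Rightarrow> 'a \<Rightarrow> bool"
  assumes "simple_graph V E" and "V \<noteq> {}"
  shows "real (phi V E) \<ge> real (card V) / (real (card V) - quad_mean_degree V E) \<and>
         (real (phi V E) = real (card V) / (real (card V) - quad_mean_degree V E) \<longleftrightarrow>
           (card V mod phi V E = 0 \<and>
            (\<forall>v\<in>V. real (degree V E v) = real (card V) * (real (phi V E) - 1) / real (phi V E))))"
proof -
  define n where "n = card V"
  define r where "r = phi V E"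
  define d where "d = (\<lambda>v. real (degree V E v))"
  define q where "q = quad_mean_degree V E"
  have fin: "finite V" using assms(1) by (simp add: simple_graph_def)
  have npos: "n > 0" using fin assms(2) by (simp add: n_def card_gt_0_iff)
  have r1: "r \<ge> 1" using phi_props[OF assms] by (simp add: r_def)
  obtain P where PU: "(\<Union>i<r. P i) = V" and Pdisj: "\<forall>i<r. \<forall>j<r. i \<noteq> j \<longrightarrow> P i \<inter> P j = {}"
    and Pdelta: "\<forall>i<r. delta_set V E (P i)"
    using phi_props(1)[OF assms] unfolding r_def gen_r_partite_def by blast
  define a where "a = (\<lambda>i. card (P i))"
  define c where "c = real n / real r"
  define D where "D = real n - c"
  define T where "T = (\<lambda>x::real. c*(real n-c)^2 + (real n-c)*(real n-3*c)*(x-c))"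
  define S where "S = (\<Sum>v\<in>V. (d v)^2)"
  have PV: "\<And>i. i < r \<Longrightarrow> P i \<subseteq> V" using Pdelta by (simp add: delta_set_def)
  have finP: "\<And>i. i < r \<Longrightarrow> finite (P i)" using PV fin finite_subset by blast
  have disj': "\<forall>i\<in>{..<r}. \<forall>j\<in>{..<r}. i \<noteq> j \<longrightarrow> P i \<inter> P j = {}" using Pdisj by blast
  have sumV: "\<And>f. (\<Sum>v\<in>V. f v) = (\<Sum>i<r. \<Sum>v\<in>P i. f v)"
    unfolding PU[symmetric] by (rule sum.UNION_disjoint) (use finP disj' in auto)
  have cardsum: "n = (\<Sum>i<r. a i)"
    unfolding n_def a_def PU[symmetric] by (rule card_UN_disjoint) (use finP disj' in auto)
  hence cardsumR: "real n = (\<Sum>i<r. real (a i))" by simp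
  have aLe: "\<And>i. i < r \<Longrightarrow> a i \<le> n" unfolding a_def n_def using PV fin by (simp add: card_mono)
  have dnn: "\<And>v. d v \<ge> 0" by (simp add: d_def)
  have dle: "\<And>i v. i < r \<Longrightarrow> v \<in> P i \<Longrightarrow> d v \<le> real n - real (a i)"
  proof -
    fix i v assume i: "i < r" and v: "v \<in> P i"
    have "int (degree V E v) \<le> int (card V) - int (card (P i))"
      using Pdelta i v by (auto simp: delta_set_def)
    hence "real_of_int (int (degree V E v)) \<le> real_of_int (int (card V) - int (card (P i)))"
      by (simp only: of_int_le_iff)
    thus "d v \<le> real n - real (a i)" by (simp add: d_def n_def a_def)
  qed
  have Sile: "\<And>i. i < r \<Longrightarrow> (\<Sum>v\<in>P i. (d v)^2) \<le> real (a i) * (real n - real (a i))^2"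
  proof -
    fix i assume i: "i < r"
    have "(\<Sum>v\<in>P i. (d v)^2) \<le> of_nat (card (P i)) * (real n - real (a i))^2"
      by (rule sum_bounded_above) (use dle[OF i] dnn in \<open>auto intro: power_mono\<close>)
    thus "?thesis i" by (simp add: a_def)
  qed
  have cpos: "c > 0" using npos r1 by (simp add: c_def)
  have rc: "real r * c = real n" using r1 by (simp add: c_def)
  have tang: "\<And>i. i < r \<Longrightarrow> real (a i) * (real n - real (a i))^2 \<le> T (real (a i))"
  proof -
    fix i assume i: "i < r"
    have "real (a i) = c \<or> real (a i) \<le> 2 * real n - 2 * c"
    proof (cases "r = 1")
      case True
      hence "i = 0" using i by simp
      hence "real (a i) = real n" using cardsumR True by simp
      thus ?thesis using True by (simp add: c_def)
    next
      case False
      hence "real r \<ge> 2" using r1 by simp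
      hence "c \<le> real n / 2" unfolding c_def using npos
        by (simp add: divide_le_eq field_simps)
      thus ?thesis using aLe[OF i] by simp
    qed
    thus "?thesis i" unfolding T_def by (rule tangent)
  qed
  have sumT: "(\<Sum>i<r. T (real (a i))) = real n * D^2"
  proof -
    have "(\<Sum>i<r. T (real (a i))) = real r * (c*(real n-c)^2) + (real n-c)*(real n-3*c)*((\<Sum>i<r. real (a i)) - real r * c)"
      unfolding T_def by (simp add: sum.distrib sum_distrib_left sum_subtractf algebra_simps)
    also have "\<dots> = real n * D^2" using rc cardsumR by (simp add: D_def)
    finally show ?thesis .
  qed
  have Ssplit: "S = (\<Sum>i<r. \<Sum>v\<in>P i. (d v)^2)" unfolding S_def by (rule sumV)
  have SleT: "(\<Sum>i<r. \<Sum>v\<in>P i. (d v)^2) \<le> (\<Sum>i<r. T (real (a i)))"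
    by (rule sum_mono) (use Sile tang in \<open>fastforce\<close>)
  have Sle: "S \<le> real n * D^2" using Ssplit SleT sumT by simp
  have Dnn: "D \<ge> 0" using rc r1 npos unfolding D_def c_def by (simp add: field_simps)
  have qdef: "q = sqrt (S / real n)" by (simp add: q_def quad_mean_degree_def S_def d_def n_def)
  have qle: "q \<le> D"
  proof -
    have "S / real n \<le> D^2" using Sle npos by (simp add: divide_le_eq mult.commute)
    hence "sqrt (S / real n) \<le> sqrt (D^2)" by (rule real_sqrt_le_mono)
    thus ?thesis using Dnn qdef by simp
  qed
  have denpos: "real n - q \<ge> c" using qle by (simp add: D_def)
  have part1: "real n / (real n - q) \<le> real r"
  proof -
    have "real n / (real n - q) \<le> real n / c"
      using denpos cpos npos by (intro divide_left_mono) auto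
    also have "\<dots> = real r" using rc cpos by (simp add: field_simps)
    finally show ?thesis .
  qed
  have part2: "real r = real n / (real n - q) \<longleftrightarrow>
      (n mod r = 0 \<and> (\<forall>v\<in>V. d v = real n * (real r - 1) / real r))"
  proof
    assume eq: "real r = real n / (real n - q)"
    have den: "real n - q > 0" using denpos cpos by linarith
    have e2: "real r * (real n - q) = real n" using eq den by (simp add: field_simps)
    have "real r * (c + q) = real r * real n" using e2 rc by (simp add: algebra_simps)
    hence "c + q = real n" using r1 by simp
    hence "q = D" unfolding D_def by simp
    hence "sqrt (S / real n) = D" using qdef by simp
    moreover have "S / real n \<ge> 0" unfolding S_def by (simp add: sum_nonneg)
    ultimately have "S / real n = D^2" by (metis real_sqrt_pow2)
    hence Seq: "S = real n * D^2" using npos by (simp add: field_simps)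
    have diff0: "(\<Sum>i<r. T (real (a i)) - (\<Sum>v\<in>P i. (d v)^2)) = 0"
      using Seq Ssplit sumT by (simp add: sum_subtractf)
    have nn: "\<forall>i\<in>{..<r}. 0 \<le> T (real (a i)) - (\<Sum>v\<in>P i. (d v)^2)"
    proof
      fix i assume "i \<in> {..<r}"
      hence i: "i < r" by simp
      show "0 \<le> T (real (a i)) - (\<Sum>v\<in>P i. (d v)^2)" using Sile[OF i] tang[OF i] by linarith
    qed
    have each: "\<forall>i\<in>{..<r}. T (real (a i)) - (\<Sum>v\<in>P i. (d v)^2) = 0"
      using sum_nonneg_eq_0_iff[of "{..<r}" "\<lambda>i. T (real (a i)) - (\<Sum>v\<in>P i. (d v)^2)"] diff0 nn
      by simp
    have gT: "\<And>i. i < r \<Longrightarrow> real (a i) * (real n - real (a i))^2 = T (real (a i))"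
    proof -
      fix i assume i: "i < r"
      have "T (real (a i)) - (\<Sum>v\<in>P i. (d v)^2) = 0" using each i by simp
      thus "?thesis i" using Sile[OF i] tang[OF i] by linarith
    qed
    have Seqi: "\<And>i. i < r \<Longrightarrow> (\<Sum>v\<in>P i. (d v)^2) = real (a i) * (real n - real (a i))^2"
    proof -
      fix i assume i: "i < r"
      have "T (real (a i)) - (\<Sum>v\<in>P i. (d v)^2) = 0" using each i by simp
      thus "?thesis i" using gT[OF i] by linarith
    qed
    have dv: "\<And>i v. i < r \<Longrightarrow> v \<in> P i \<Longrightarrow> d v = real n - real (a i)"
    proof -
      fix i v assume i: "i < r" and v: "v \<in> P i"
      have s0: "(\<Sum>w\<in>P i. (real n - real (a i))^2 - (d w)^2) = 0"
        using Seqi[OF i] by (simp add: sum_subtractf a_def)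
      have nn2: "\<forall>w\<in>P i. 0 \<le> (real n - real (a i))^2 - (d w)^2"
      proof
        fix w assume w: "w \<in> P i"
        have "(d w)^2 \<le> (real n - real (a i))^2" using dle[OF i w] dnn[of w] by (intro power_mono) auto
        thus "0 \<le> (real n - real (a i))^2 - (d w)^2" by simp
      qed
      have "\<forall>w\<in>P i. (real n - real (a i))^2 - (d w)^2 = 0"
        using sum_nonneg_eq_0_iff[OF finP[OF i], of "\<lambda>w. (real n - real (a i))^2 - (d w)^2"] s0 nn2
        by simp
      hence "(d v)^2 = (real n - real (a i))^2" using v by simp
      thus "d v = real n - real (a i)" using dnn dle[OF i v]
        using power2_eq_iff_nonneg[of "d v" "real n - real (a i)"] by (meson order.trans)
    qed
    have ac: "\<And>i. i < r \<Longrightarrow> real (a i) = c"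
    proof (rule ccontr)
      fix j assume j: "j < r" and ne: "real (a j) \<noteq> c"
      have z: "(real (a j) - c)^2 * (2 * real n - 2*c - real (a j)) = 0"
        using tangent_eq gT[OF j] unfolding T_def by blast
      hence aj: "real (a j) = 2 * real n - 2*c" using ne by simp
      show False
      proof (cases "r = 1")
        case True
        hence "j = 0" using j by simp
        hence "real (a j) = real n" using cardsumR True by simp
        thus False using ne True by (simp add: c_def)
      next
        case False
        hence r2: "real r \<ge> 2" using r1 by simp
        hence "c \<le> real n / 2" unfolding c_def using npos by (simp add: divide_le_eq field_simps)
        moreover have "real (a j) \<le> real n" using aLe[OF j] by simp
        ultimately have cn: "c = real n / 2" using aj by linarith
        hence "c * real r = c * 2" using rc by (simp add: mult.commute)
        hence "real r = 2" using cpos by simp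
        hence r2': "r = 2" by simp
        have ajn: "real (a j) = real n" using aj cn by simp
        define k where "k = 1 - j"
        have k: "k < r" "k \<noteq> j" using j r2' unfolding k_def by arith+
        have "real n = real (a 0) + real (a 1)" using cardsumR r2' by (simp add: numeral_2_eq_2)
        hence ak: "real (a k) = 0" using ajn j r2' by (cases j) (auto simp: k_def)
        have "(real (a k) - c)^2 * (2 * real n - 2*c - real (a k)) = 0"
          using tangent_eq gT[OF k(1)] unfolding T_def by blast
        hence "c^2 * real n = 0" using ak cn by (simp add: algebra_simps)
        thus False using cpos npos by simp
      qed
    qed
    have "\<And>i. i \<in> {..<r} \<Longrightarrow> a i = a 0"
    proof -
      fix i assume "i \<in> {..<r}"
      hence "real (a i) = real (a 0)" using ac r1 by simp
      thus "a i = a 0" by simp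
    qed
    hence "n = (\<Sum>i<r. a 0)" using cardsum by (metis sum.cong)
    hence "n = r * a 0" by simp
    hence m: "n mod r = 0" by simp
    have "\<forall>v\<in>V. d v = real n * (real r - 1) / real r"
    proof
      fix v assume "v \<in> V"
      then obtain i where i: "i < r" "v \<in> P i" using PU by blast
      have "d v = real n - c" using dv[OF i] ac[OF i(1)] by simp
      thus "d v = real n * (real r - 1) / real r" using r1 by (simp add: c_def field_simps)
    qed
    with m show "n mod r = 0 \<and> (\<forall>v\<in>V. d v = real n * (real r - 1) / real r)" by blast
  next
    assume h: "n mod r = 0 \<and> (\<forall>v\<in>V. d v = real n * (real r - 1) / real r)"
    have Dv: "\<forall>v\<in>V. d v = D" using h r1 by (simp add: D_def c_def field_simps)
    have "S = real n * D^2" unfolding S_def n_def using Dv by simp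
    hence "S / real n = D^2" using npos by simp
    hence "q = D" using qdef Dnn by simp
    hence "real n - q = c" by (simp add: D_def)
    thus "real r = real n / (real n - q)" using rc cpos by (simp add: eq_divide_eq)
  qed
  show ?thesis using part1 part2 unfolding n_def[symmetric] r_def[symmetric] q_def[symmetric] d_def
    by simp
qed

end
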